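(* There are infinitely many $\mathbb{Q}$-rational points on $O$. More precisely, let $Q\subset\mathbf{P}^4$ be the quadric surface given by $l=q=0$, where $$l:=x_0+x_1+x_2-3x_3-3x_4,$$ $$q:=x_0^2+x_1^2+x_2^2+9x_3^2-x_0x_1-x_0x_2-3x_0x_3-x_1x_2-3x_1x_3-3x_2x_3.$$ Then the double covering $\pi:O\to\mathbf{P}^4_{\mathbb{Q}}$ splits over $Q$; in particular, there are one or two $\mathbb{Q}$-rational points of $O$ above each $\mathbb{Q}$-rational point of $Q$.
   Context: Let $$\Delta'(x_0,\ldots,x_4):=\prod_{i_1,\ldots,i_4\in\{0,1\}}\big(\sqrt{x_0}+(-1)^{i_1}\sqrt{x_1}+(-1)^{i_2}\sqrt{x_2}+(-1)^{i_3}\sqrt{x_3}+(-1)^{i_4}\sqrt{x_4}\big)\in\mathbb{Q}[x_0,\ldots,x_4]$$ (symmetric, degree $8$). $O$ is the double covering $\pi:O\to\mathbf{P}^4_{\mathbb{Q}}$ given by $w^2=(-3)\Delta'(x_0,\ldots,x_4)$ (a hypersurface in $\mathbf{P}(4,1,1,1,1,1)$). "Splits over $Q$" means that $\pi^{-1}(Q)\to Q$ is a trivial double covering, i.e. $(-3)\Delta'$ restricted to $Q$ is a square. *)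

theory Defs
  imports Complex_Main
begin

text \<open>Points of affine 5-space are functions nat => _, only indices 0..4 matter.\<close>

definition DeltaP :: "(nat \<Rightarrow> complex) \<Rightarrow> complex" where
  "DeltaP x = (\<Prod>S\<in>Pow {1..4::nat}.
      csqrt (x 0) + (\<Sum>j\<in>{1..4::nat}. (if j \<in> S then -1 else 1) * csqrt (x j)))"

definition lform :: "(nat \<Rightarrow> 'a::comm_ring_1) \<Rightarrow> 'a" where
  "lform x = x 0 + x 1 + x 2 - 3 * x 3 - 3 * x 4"

definition qform :: "(nat \<Rightarrow> 'a::comm_ring_1) \<Rightarrow> 'a" where
  "qform x = (x 0)^2 + (x 1)^2 + (x 2)^2 + 9 * (x 3)^2 - x 0 * x 1 - x 0 * x 2
     - 3 * x 0 * x 3 - x 1 * x 2 - 3 * x 1 * x 3 - 3 * x 2 * x 3"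

definition monos5 :: "nat \<Rightarrow> (nat \<Rightarrow> nat) set" where
  "monos5 d = {e. (\<forall>i\<ge>5. e i = 0) \<and> sum e {..<5} = d}"

definition form_eval :: "nat \<Rightarrow> ((nat \<Rightarrow> nat) \<Rightarrow> rat) \<Rightarrow> (nat \<Rightarrow> complex) \<Rightarrow> complex" where
  "form_eval d c x = (\<Sum>e\<in>monos5 d. of_rat (c e) * (\<Prod>i<5. x i ^ e i))"

text \<open>Q-rational points of O in P(4,1,1,1,1,1): classes of (w,x) with x nonzero, w^2 = -3 Delta'(x),
  modulo (w,x) ~ (mu^4 w, mu x), mu in Q nonzero.\<close>
definition O_rat_points :: "(rat \<times> (nat \<Rightarrow> rat)) set set" where
  "O_rat_points = {{(\<mu>^4 * w, \<lambda>i. \<mu> * x i) | \<mu>. \<mu> \<noteq> 0} | w x.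
      (\<forall>i\<ge>5. x i = 0) \<and> (\<exists>i<5. x i \<noteq> 0) \<and>
      (of_rat w)^2 = -3 * DeltaP (\<lambda>i. of_rat (x i))}"

end

theory Submission
  imports Defs
begin

definition ph1 :: "complex \<Rightarrow> complex \<Rightarrow> complex" where
  "ph1 c0 v = v^1 + c0 * v^0"

definition ps1 :: "complex \<Rightarrow> complex \<Rightarrow> complex \<Rightarrow> complex" where
  "ps1 c0 m N = (m^2 + 2 * m * c0 - N + c0^2)"

lemma gen1: "ph1 c0 (m+n) * ph1 c0 (m-n) = ps1 c0 m (n^2)"
  unfolding ph1_def ps1_def by algebra

lemma step1:
  assumes "a^2 = y"
  shows "ph1 c0 ((t+a)^2) * ph1 c0 ((t-a)^2) = ps1 c0 (t^2+y) (4*t^2*y)"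
proof -
  have e1: "(t+a)^2 = (t^2+y) + 2*t*a" using assms by (simp add: power2_sum)
  have e2: "(t-a)^2 = (t^2+y) - 2*t*a" using assms by (simp add: power2_diff)
  have e3: "4*t^2*y = (2*t*a)^2" using assms by (simp add: power_mult_distrib)
  show ?thesis unfolding e1 e2 e3 by (rule gen1)
qed

definition ph2 :: "complex \<Rightarrow> complex \<Rightarrow> complex \<Rightarrow> complex" where
  "ph2 c0 c1 v = v^2 + c0 * v^0 + c1 * v^1"

definition ps2 :: "complex \<Rightarrow> complex \<Rightarrow> complex \<Rightarrow> complex \<Rightarrow> complex" where
  "ps2 c0 c1 m N = (m^4 + 2 * m^3 * c1 - 2 * m^2 * N + 2 * m^2 * c0 + m^2 * c1^2 - 2 * m * N * c1 + 2 * m * c0 * c1 + N^2 + 2 * N * c0 - N * c1^2 + c0^2)"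

lemma gen2: "ph2 c0 c1 (m+n) * ph2 c0 c1 (m-n) = ps2 c0 c1 m (n^2)"
  unfolding ph2_def ps2_def by algebra

lemma step2:
  assumes "a^2 = y"
  shows "ph2 c0 c1 ((t+a)^2) * ph2 c0 c1 ((t-a)^2) = ps2 c0 c1 (t^2+y) (4*t^2*y)"
proof -
  have e1: "(t+a)^2 = (t^2+y) + 2*t*a" using assms by (simp add: power2_sum)
  have e2: "(t-a)^2 = (t^2+y) - 2*t*a" using assms by (simp add: power2_diff)
  have e3: "4*t^2*y = (2*t*a)^2" using assms by (simp add: power_mult_distrib)
  show ?thesis unfolding e1 e2 e3 by (rule gen2)
qed

definition ph4 :: "complex \<Rightarrow> complex \<Rightarrow> complex \<Rightarrow> complex \<Rightarrow> complex \<Rightarrow> complex" where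
  "ph4 c0 c1 c2 c3 v = v^4 + c0 * v^0 + c1 * v^1 + c2 * v^2 + c3 * v^3"

definition ps4 :: "complex \<Rightarrow> complex \<Rightarrow> complex \<Rightarrow> complex \<Rightarrow> complex \<Rightarrow> complex \<Rightarrow> complex" where
  "ps4 c0 c1 c2 c3 m N = (m^8 + 2 * m^7 * c3 - 4 * m^6 * N + 2 * m^6 * c2 + m^6 * c3^2 - 6 * m^5 * N * c3 + 2 * m^5 * c1 + 2 * m^5 * c2 * c3 + 6 * m^4 * N^2 - 2 * m^4 * N * c2 - 3 * m^4 * N * c3^2 + 2 * m^4 * c0 + 2 * m^4 * c1 * c3 + m^4 * c2^2 + 6 * m^3 * N^2 * c3 + 4 * m^3 * N * c1 - 4 * m^3 * N * c2 * c3 + 2 * m^3 * c0 * c3 + 2 * m^3 * c1 * c2 - 4 * m^2 * N^3 - 2 * m^2 * N^2 * c2 + 3 * m^2 * N^2 * c3^2 + 12 * m^2 * N * c0 - 2 * m^2 * N * c2^2 + 2 * m^2 * c0 * c2 + m^2 * c1^2 - 2 * m * N^3 * c3 - 6 * m * N^2 * c1 + 2 * m * N^2 * c2 * c3 + 6 * m * N * c0 * c3 - 2 * m * N * c1 * c2 + 2 * m * c0 * c1 + N^4 + 2 * N^3 * c2 - N^3 * c3^2 + 2 * N^2 * c0 - 2 * N^2 * c1 * c3 + N^2 * c2^2 + 2 * N * c0 * c2 - N * c1^2 + c0^2)"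

lemma gen4: "ph4 c0 c1 c2 c3 (m+n) * ph4 c0 c1 c2 c3 (m-n) = ps4 c0 c1 c2 c3 m (n^2)"
  unfolding ph4_def ps4_def by algebra

lemma step4:
  assumes "a^2 = y"
  shows "ph4 c0 c1 c2 c3 ((t+a)^2) * ph4 c0 c1 c2 c3 ((t-a)^2) = ps4 c0 c1 c2 c3 (t^2+y) (4*t^2*y)"
proof -
  have e1: "(t+a)^2 = (t^2+y) + 2*t*a" using assms by (simp add: power2_sum)
  have e2: "(t-a)^2 = (t^2+y) - 2*t*a" using assms by (simp add: power2_diff)
  have e3: "4*t^2*y = (2*t*a)^2" using assms by (simp add: power_mult_distrib)
  show ?thesis unfolding e1 e2 e3 by (rule gen4)
qed

definition P8 :: "complex \<Rightarrow> complex \<Rightarrow> complex \<Rightarrow> complex \<Rightarrow> complex \<Rightarrow> complex" where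
  "P8 T x1 x2 x3 x4 = (x1^8 - 8 * x1^7 * x2 - 8 * x1^7 * x3 - 8 * x1^7 * x4 + 28 * x1^6 * x2^2 + 40 * x1^6 * x2 * x3 + 40 * x1^6 * x2 * x4 + 28 * x1^6 * x3^2 + 40 * x1^6 * x3 * x4 + 28 * x1^6 * x4^2 - 56 * x1^5 * x2^3 - 72 * x1^5 * x2^2 * x3 - 72 * x1^5 * x2^2 * x4 - 72 * x1^5 * x2 * x3^2 - 176 * x1^5 * x2 * x3 * x4 - 72 * x1^5 * x2 * x4^2 - 56 * x1^5 * x3^3 - 72 * x1^5 * x3^2 * x4 - 72 * x1^5 * x3 * x4^2 - 56 * x1^5 * x4^3 + 70 * x1^4 * x2^4 + 40 * x1^4 * x2^3 * x3 + 40 * x1^4 * x2^3 * x4 + 36 * x1^4 * x2^2 * x3^2 + 344 * x1^4 * x2^2 * x3 * x4 + 36 * x1^4 * x2^2 * x4^2 + 40 * x1^4 * x2 * x3^3 + 344 * x1^4 * x2 * x3^2 * x4 + 344 * x1^4 * x2 * x3 * x4^2 + 40 * x1^4 * x2 * x4^3 + 70 * x1^4 * x3^4 + 40 * x1^4 * x3^3 * x4 + 36 * x1^4 * x3^2 * x4^2 + 40 * x1^4 * x3 * x4^3 + 70 * x1^4 * x4^4 - 56 * x1^3 * x2^5 + 40 * x1^3 * x2^4 * x3 + 40 * x1^3 * x2^4 * x4 + 16 * x1^3 * x2^3 * x3^2 - 416 * x1^3 * x2^3 * x3 * x4 + 16 * x1^3 * x2^3 * x4^2 + 16 * x1^3 *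 x2^2 * x3^3 - 272 * x1^3 * x2^2 * x3^2 * x4 - 272 * x1^3 * x2^2 * x3 * x4^2 + 16 * x1^3 * x2^2 * x4^3 + 40 * x1^3 * x2 * x3^4 - 416 * x1^3 * x2 * x3^3 * x4 - 272 * x1^3 * x2 * x3^2 * x4^2 - 416 * x1^3 * x2 * x3 * x4^3 + 40 * x1^3 * x2 * x4^4 - 56 * x1^3 * x3^5 + 40 * x1^3 * x3^4 * x4 + 16 * x1^3 * x3^3 * x4^2 + 16 * x1^3 * x3^2 * x4^3 + 40 * x1^3 * x3 * x4^4 - 56 * x1^3 * x4^5 + 28 * x1^2 * x2^6 - 72 * x1^2 * x2^5 * x3 - 72 * x1^2 * x2^5 * x4 + 36 * x1^2 * x2^4 * x3^2 + 344 * x1^2 * x2^4 * x3 * x4 + 36 * x1^2 * x2^4 * x4^2 + 16 * x1^2 * x2^3 * x3^3 - 272 * x1^2 * x2^3 * x3^2 * x4 - 272 * x1^2 * x2^3 * x3 * x4^2 + 16 * x1^2 * x2^3 * x4^3 + 36 * x1^2 * x2^2 * x3^4 - 272 * x1^2 * x2^2 * x3^3 * x4 + 2008 * x1^2 * x2^2 * x3^2 * x4^2 - 272 * x1^2 * x2^2 * x3 * x4^3 + 36 * x1^2 * x2^2 * x4^4 - 72 * x1^2 * x2 * x3^5 + 344 * x1^2 * x2 * x3^4 * x4 - 272 * x1^2 * x2 * x3^3 * x4^2 - 272 * x1^2 * x2 * x3^2 * x4^3 + 344 * x1^2 * x2 * x3 * x4^4 - 72 * x1^2 * x2 * x4^5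 + 28 * x1^2 * x3^6 - 72 * x1^2 * x3^5 * x4 + 36 * x1^2 * x3^4 * x4^2 + 16 * x1^2 * x3^3 * x4^3 + 36 * x1^2 * x3^2 * x4^4 - 72 * x1^2 * x3 * x4^5 + 28 * x1^2 * x4^6 - 8 * x1 * x2^7 + 40 * x1 * x2^6 * x3 + 40 * x1 * x2^6 * x4 - 72 * x1 * x2^5 * x3^2 - 176 * x1 * x2^5 * x3 * x4 - 72 * x1 * x2^5 * x4^2 + 40 * x1 * x2^4 * x3^3 + 344 * x1 * x2^4 * x3^2 * x4 + 344 * x1 * x2^4 * x3 * x4^2 + 40 * x1 * x2^4 * x4^3 + 40 * x1 * x2^3 * x3^4 - 416 * x1 * x2^3 * x3^3 * x4 - 272 * x1 * x2^3 * x3^2 * x4^2 - 416 * x1 * x2^3 * x3 * x4^3 + 40 * x1 * x2^3 * x4^4 - 72 * x1 * x2^2 * x3^5 + 344 * x1 * x2^2 * x3^4 * x4 - 272 * x1 * x2^2 * x3^3 * x4^2 - 272 * x1 * x2^2 * x3^2 * x4^3 + 344 * x1 * x2^2 * x3 * x4^4 - 72 * x1 * x2^2 * x4^5 + 40 * x1 * x2 * x3^6 - 176 * x1 * x2 * x3^5 * x4 + 344 * x1 * x2 * x3^4 * x4^2 - 416 * x1 * x2 * x3^3 * x4^3 + 344 * x1 * x2 * x3^2 * x4^4 - 176 * x1 * x2 * x3 * x4^5 + 40 * x1 * x2 * x4^6 - 8 * x1 * x3^7 + 40 * x1 * x3^6 * x4 - 72 * x1 * x3^5 * x4^2 + 40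 * x1 * x3^4 * x4^3 + 40 * x1 * x3^3 * x4^4 - 72 * x1 * x3^2 * x4^5 + 40 * x1 * x3 * x4^6 - 8 * x1 * x4^7 + x2^8 - 8 * x2^7 * x3 - 8 * x2^7 * x4 + 28 * x2^6 * x3^2 + 40 * x2^6 * x3 * x4 + 28 * x2^6 * x4^2 - 56 * x2^5 * x3^3 - 72 * x2^5 * x3^2 * x4 - 72 * x2^5 * x3 * x4^2 - 56 * x2^5 * x4^3 + 70 * x2^4 * x3^4 + 40 * x2^4 * x3^3 * x4 + 36 * x2^4 * x3^2 * x4^2 + 40 * x2^4 * x3 * x4^3 + 70 * x2^4 * x4^4 - 56 * x2^3 * x3^5 + 40 * x2^3 * x3^4 * x4 + 16 * x2^3 * x3^3 * x4^2 + 16 * x2^3 * x3^2 * x4^3 + 40 * x2^3 * x3 * x4^4 - 56 * x2^3 * x4^5 + 28 * x2^2 * x3^6 - 72 * x2^2 * x3^5 * x4 + 36 * x2^2 * x3^4 * x4^2 + 16 * x2^2 * x3^3 * x4^3 + 36 * x2^2 * x3^2 * x4^4 - 72 * x2^2 * x3 * x4^5 + 28 * x2^2 * x4^6 - 8 * x2 * x3^7 + 40 * x2 * x3^6 * x4 - 72 * x2 * x3^5 * x4^2 + 40 * x2 * x3^4 * x4^3 + 40 * x2 * x3^3 * x4^4 - 72 * x2 * x3^2 * x4^5 + 40 * x2 * x3 * x4^6 - 8 * x2 * x4^7 + x3^8 - 8 * x3^7 * x4 + 28 * x3^6 * x4^2 - 56 * x3^5 * x4^3 + 70 * x3^4 *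 x4^4 - 56 * x3^3 * x4^5 + 28 * x3^2 * x4^6 - 8 * x3 * x4^7 + x4^8) * (T)^0 + (-8 * x1^7 + 40 * x1^6 * x2 + 40 * x1^6 * x3 + 40 * x1^6 * x4 - 72 * x1^5 * x2^2 - 176 * x1^5 * x2 * x3 - 176 * x1^5 * x2 * x4 - 72 * x1^5 * x3^2 - 176 * x1^5 * x3 * x4 - 72 * x1^5 * x4^2 + 40 * x1^4 * x2^3 + 344 * x1^4 * x2^2 * x3 + 344 * x1^4 * x2^2 * x4 + 344 * x1^4 * x2 * x3^2 - 752 * x1^4 * x2 * x3 * x4 + 344 * x1^4 * x2 * x4^2 + 40 * x1^4 * x3^3 + 344 * x1^4 * x3^2 * x4 + 344 * x1^4 * x3 * x4^2 + 40 * x1^4 * x4^3 + 40 * x1^3 * x2^4 - 416 * x1^3 * x2^3 * x3 - 416 * x1^3 * x2^3 * x4 - 272 * x1^3 * x2^2 * x3^2 + 928 * x1^3 * x2^2 * x3 * x4 - 272 * x1^3 * x2^2 * x4^2 - 416 * x1^3 * x2 * x3^3 + 928 * x1^3 * x2 * x3^2 * x4 + 928 * x1^3 * x2 * x3 * x4^2 - 416 * x1^3 * x2 * x4^3 + 40 * x1^3 * x3^4 - 416 * x1^3 * x3^3 * x4 - 272 * x1^3 * x3^2 * x4^2 - 416 * x1^3 * x3 * x4^3 + 40 * x1^3 * x4^4 - 72 * x1^2 * x2^5 + 344 * x1^2 * x2^4 * x3 + 344 * x1^2 * x2^4 * x4 - 272 * x1^2 * x2^3 * x3^2 + 928 * x1^2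 * x2^3 * x3 * x4 - 272 * x1^2 * x2^3 * x4^2 - 272 * x1^2 * x2^2 * x3^3 - 1520 * x1^2 * x2^2 * x3^2 * x4 - 1520 * x1^2 * x2^2 * x3 * x4^2 - 272 * x1^2 * x2^2 * x4^3 + 344 * x1^2 * x2 * x3^4 + 928 * x1^2 * x2 * x3^3 * x4 - 1520 * x1^2 * x2 * x3^2 * x4^2 + 928 * x1^2 * x2 * x3 * x4^3 + 344 * x1^2 * x2 * x4^4 - 72 * x1^2 * x3^5 + 344 * x1^2 * x3^4 * x4 - 272 * x1^2 * x3^3 * x4^2 - 272 * x1^2 * x3^2 * x4^3 + 344 * x1^2 * x3 * x4^4 - 72 * x1^2 * x4^5 + 40 * x1 * x2^6 - 176 * x1 * x2^5 * x3 - 176 * x1 * x2^5 * x4 + 344 * x1 * x2^4 * x3^2 - 752 * x1 * x2^4 * x3 * x4 + 344 * x1 * x2^4 * x4^2 - 416 * x1 * x2^3 * x3^3 + 928 * x1 * x2^3 * x3^2 * x4 + 928 * x1 * x2^3 * x3 * x4^2 - 416 * x1 * x2^3 * x4^3 + 344 * x1 * x2^2 * x3^4 + 928 * x1 * x2^2 * x3^3 * x4 - 1520 * x1 * x2^2 * x3^2 * x4^2 + 928 * x1 * x2^2 * x3 * x4^3 + 344 * x1 * x2^2 * x4^4 - 176 * x1 * x2 * x3^5 - 752 * x1 * x2 * x3^4 * x4 + 928 * x1 * x2 * x3^3 * x4^2 + 928 * x1 * x2 * x3^2 * x4^3 - 752 * x1 * x2 * x3 * x4^4 - 176 * x1 *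 x2 * x4^5 + 40 * x1 * x3^6 - 176 * x1 * x3^5 * x4 + 344 * x1 * x3^4 * x4^2 - 416 * x1 * x3^3 * x4^3 + 344 * x1 * x3^2 * x4^4 - 176 * x1 * x3 * x4^5 + 40 * x1 * x4^6 - 8 * x2^7 + 40 * x2^6 * x3 + 40 * x2^6 * x4 - 72 * x2^5 * x3^2 - 176 * x2^5 * x3 * x4 - 72 * x2^5 * x4^2 + 40 * x2^4 * x3^3 + 344 * x2^4 * x3^2 * x4 + 344 * x2^4 * x3 * x4^2 + 40 * x2^4 * x4^3 + 40 * x2^3 * x3^4 - 416 * x2^3 * x3^3 * x4 - 272 * x2^3 * x3^2 * x4^2 - 416 * x2^3 * x3 * x4^3 + 40 * x2^3 * x4^4 - 72 * x2^2 * x3^5 + 344 * x2^2 * x3^4 * x4 - 272 * x2^2 * x3^3 * x4^2 - 272 * x2^2 * x3^2 * x4^3 + 344 * x2^2 * x3 * x4^4 - 72 * x2^2 * x4^5 + 40 * x2 * x3^6 - 176 * x2 * x3^5 * x4 + 344 * x2 * x3^4 * x4^2 - 416 * x2 * x3^3 * x4^3 + 344 * x2 * x3^2 * x4^4 - 176 * x2 * x3 * x4^5 + 40 * x2 * x4^6 - 8 * x3^7 + 40 * x3^6 * x4 - 72 * x3^5 * x4^2 + 40 * x3^4 * x4^3 + 40 * x3^3 * x4^4 - 72 * x3^2 * x4^5 + 40 * x3 * x4^6 - 8 * x4^7) * (T)^1 + (28 * x1^6 - 72 * x1^5 * x2 - 72 * x1^5 * x3 - 72 * x1^5 * x4 +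 36 * x1^4 * x2^2 + 344 * x1^4 * x2 * x3 + 344 * x1^4 * x2 * x4 + 36 * x1^4 * x3^2 + 344 * x1^4 * x3 * x4 + 36 * x1^4 * x4^2 + 16 * x1^3 * x2^3 - 272 * x1^3 * x2^2 * x3 - 272 * x1^3 * x2^2 * x4 - 272 * x1^3 * x2 * x3^2 + 928 * x1^3 * x2 * x3 * x4 - 272 * x1^3 * x2 * x4^2 + 16 * x1^3 * x3^3 - 272 * x1^3 * x3^2 * x4 - 272 * x1^3 * x3 * x4^2 + 16 * x1^3 * x4^3 + 36 * x1^2 * x2^4 - 272 * x1^2 * x2^3 * x3 - 272 * x1^2 * x2^3 * x4 + 2008 * x1^2 * x2^2 * x3^2 - 1520 * x1^2 * x2^2 * x3 * x4 + 2008 * x1^2 * x2^2 * x4^2 - 272 * x1^2 * x2 * x3^3 - 1520 * x1^2 * x2 * x3^2 * x4 - 1520 * x1^2 * x2 * x3 * x4^2 - 272 * x1^2 * x2 * x4^3 + 36 * x1^2 * x3^4 - 272 * x1^2 * x3^3 * x4 + 2008 * x1^2 * x3^2 * x4^2 - 272 * x1^2 * x3 * x4^3 + 36 * x1^2 * x4^4 - 72 * x1 * x2^5 + 344 * x1 * x2^4 * x3 + 344 * x1 * x2^4 * x4 - 272 * x1 * x2^3 * x3^2 + 928 * x1 * x2^3 * x3 * x4 - 272 * x1 * x2^3 * x4^2 - 272 * x1 * x2^2 * x3^3 - 1520 * x1 * x2^2 * x3^2 * x4 - 1520 * x1 * x2^2 * x3 * x4^2 - 272 * x1 * x2^2 *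 x4^3 + 344 * x1 * x2 * x3^4 + 928 * x1 * x2 * x3^3 * x4 - 1520 * x1 * x2 * x3^2 * x4^2 + 928 * x1 * x2 * x3 * x4^3 + 344 * x1 * x2 * x4^4 - 72 * x1 * x3^5 + 344 * x1 * x3^4 * x4 - 272 * x1 * x3^3 * x4^2 - 272 * x1 * x3^2 * x4^3 + 344 * x1 * x3 * x4^4 - 72 * x1 * x4^5 + 28 * x2^6 - 72 * x2^5 * x3 - 72 * x2^5 * x4 + 36 * x2^4 * x3^2 + 344 * x2^4 * x3 * x4 + 36 * x2^4 * x4^2 + 16 * x2^3 * x3^3 - 272 * x2^3 * x3^2 * x4 - 272 * x2^3 * x3 * x4^2 + 16 * x2^3 * x4^3 + 36 * x2^2 * x3^4 - 272 * x2^2 * x3^3 * x4 + 2008 * x2^2 * x3^2 * x4^2 - 272 * x2^2 * x3 * x4^3 + 36 * x2^2 * x4^4 - 72 * x2 * x3^5 + 344 * x2 * x3^4 * x4 - 272 * x2 * x3^3 * x4^2 - 272 * x2 * x3^2 * x4^3 + 344 * x2 * x3 * x4^4 - 72 * x2 * x4^5 + 28 * x3^6 - 72 * x3^5 * x4 + 36 * x3^4 * x4^2 + 16 * x3^3 * x4^3 + 36 * x3^2 * x4^4 - 72 * x3 * x4^5 + 28 * x4^6) * (T)^2 + (-56 * x1^5 + 40 * x1^4 * x2 + 40 * x1^4 * x3 + 40 * x1^4 * x4 + 16 * x1^3 * x2^2 - 416 * x1^3 * x2 * x3 - 416 * x1^3 * x2 * x4 + 16 * x1^3 * x3^2 - 416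 * x1^3 * x3 * x4 + 16 * x1^3 * x4^2 + 16 * x1^2 * x2^3 - 272 * x1^2 * x2^2 * x3 - 272 * x1^2 * x2^2 * x4 - 272 * x1^2 * x2 * x3^2 + 928 * x1^2 * x2 * x3 * x4 - 272 * x1^2 * x2 * x4^2 + 16 * x1^2 * x3^3 - 272 * x1^2 * x3^2 * x4 - 272 * x1^2 * x3 * x4^2 + 16 * x1^2 * x4^3 + 40 * x1 * x2^4 - 416 * x1 * x2^3 * x3 - 416 * x1 * x2^3 * x4 - 272 * x1 * x2^2 * x3^2 + 928 * x1 * x2^2 * x3 * x4 - 272 * x1 * x2^2 * x4^2 - 416 * x1 * x2 * x3^3 + 928 * x1 * x2 * x3^2 * x4 + 928 * x1 * x2 * x3 * x4^2 - 416 * x1 * x2 * x4^3 + 40 * x1 * x3^4 - 416 * x1 * x3^3 * x4 - 272 * x1 * x3^2 * x4^2 - 416 * x1 * x3 * x4^3 + 40 * x1 * x4^4 - 56 * x2^5 + 40 * x2^4 * x3 + 40 * x2^4 * x4 + 16 * x2^3 * x3^2 - 416 * x2^3 * x3 * x4 + 16 * x2^3 * x4^2 + 16 * x2^2 * x3^3 - 272 * x2^2 * x3^2 * x4 - 272 * x2^2 * x3 * x4^2 + 16 * x2^2 * x4^3 + 40 * x2 * x3^4 - 416 * x2 * x3^3 * x4 - 272 * x2 * x3^2 * x4^2 - 416 * x2 * x3 * x4^3 + 40 * x2 * x4^4 - 56 * x3^5 + 40 * x3^4 * x4 + 16 * x3^3 * x4^2 + 16 * x3^2 * x4^3 + 40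 * x3 * x4^4 - 56 * x4^5) * (T)^3 + (70 * x1^4 + 40 * x1^3 * x2 + 40 * x1^3 * x3 + 40 * x1^3 * x4 + 36 * x1^2 * x2^2 + 344 * x1^2 * x2 * x3 + 344 * x1^2 * x2 * x4 + 36 * x1^2 * x3^2 + 344 * x1^2 * x3 * x4 + 36 * x1^2 * x4^2 + 40 * x1 * x2^3 + 344 * x1 * x2^2 * x3 + 344 * x1 * x2^2 * x4 + 344 * x1 * x2 * x3^2 - 752 * x1 * x2 * x3 * x4 + 344 * x1 * x2 * x4^2 + 40 * x1 * x3^3 + 344 * x1 * x3^2 * x4 + 344 * x1 * x3 * x4^2 + 40 * x1 * x4^3 + 70 * x2^4 + 40 * x2^3 * x3 + 40 * x2^3 * x4 + 36 * x2^2 * x3^2 + 344 * x2^2 * x3 * x4 + 36 * x2^2 * x4^2 + 40 * x2 * x3^3 + 344 * x2 * x3^2 * x4 + 344 * x2 * x3 * x4^2 + 40 * x2 * x4^3 + 70 * x3^4 + 40 * x3^3 * x4 + 36 * x3^2 * x4^2 + 40 * x3 * x4^3 + 70 * x4^4) * (T)^4 + (-56 * x1^3 - 72 * x1^2 * x2 - 72 * x1^2 * x3 - 72 * x1^2 * x4 - 72 * x1 * x2^2 - 176 * x1 * x2 * x3 - 176 * x1 * x2 * x4 - 72 * x1 * x3^2 - 176 * x1 * x3 * x4 - 72 * x1 * x4^2 - 56 * x2^3 - 72 * x2^2 * x3 - 72 * x2^2 * x4 - 72 * x2 * x3^2 - 176 * x2 * x3 * x4 - 72 * x2 * x4^2 -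 56 * x3^3 - 72 * x3^2 * x4 - 72 * x3 * x4^2 - 56 * x4^3) * (T)^5 + (28 * x1^2 + 40 * x1 * x2 + 40 * x1 * x3 + 40 * x1 * x4 + 28 * x2^2 + 40 * x2 * x3 + 40 * x2 * x4 + 28 * x3^2 + 40 * x3 * x4 + 28 * x4^2) * (T)^6 + (-8 * x1 - 8 * x2 - 8 * x3 - 8 * x4) * (T)^7 + (1) * (T)^8"

lemma stage2: "ps1 (- x4) (T + x3) (4*T*x3) = ph2 (x3^2 - 2 * x3 * x4 + x4^2) (-2 * x3 - 2 * x4) T"
  unfolding ps1_def ph2_def by algebra

lemma stage4: "ps2 (x3^2 - 2 * x3 * x4 + x4^2) (-2 * x3 - 2 * x4) (T + x2) (4*T*x2) = ph4 (x2^4 - 4 * x2^3 * x3 - 4 * x2^3 * x4 + 6 * x2^2 * x3^2 + 4 * x2^2 * x3 * x4 + 6 * x2^2 * x4^2 - 4 * x2 * x3^3 + 4 * x2 * x3^2 * x4 + 4 * x2 * x3 * x4^2 - 4 * x2 * x4^3 + x3^4 - 4 * x3^3 * x4 + 6 * x3^2 * x4^2 - 4 * x3 * x4^3 + x4^4) (-4 * x2^3 + 4 * x2^2 * x3 + 4 * x2^2 * x4 + 4 * x2 * x3^2 - 40 * x2 * x3 * x4 + 4 * x2 * x4^2 - 4 * x3^3 + 4 * x3^2 * x4 + 4 * x3 * x4^2 - 4 * x4^3) (6 * x2^2 + 4 * x2 * x3 + 4 * x2 * x4 + 6 * x3^2 + 4 * x3 * x4 + 6 * x4^2) (-4 * x2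 - 4 * x3 - 4 * x4) T"
  unfolding ps2_def ph4_def by algebra

lemma stage8: "ps4 (x2^4 - 4 * x2^3 * x3 - 4 * x2^3 * x4 + 6 * x2^2 * x3^2 + 4 * x2^2 * x3 * x4 + 6 * x2^2 * x4^2 - 4 * x2 * x3^3 + 4 * x2 * x3^2 * x4 + 4 * x2 * x3 * x4^2 - 4 * x2 * x4^3 + x3^4 - 4 * x3^3 * x4 + 6 * x3^2 * x4^2 - 4 * x3 * x4^3 + x4^4) (-4 * x2^3 + 4 * x2^2 * x3 + 4 * x2^2 * x4 + 4 * x2 * x3^2 - 40 * x2 * x3 * x4 + 4 * x2 * x4^2 - 4 * x3^3 + 4 * x3^2 * x4 + 4 * x3 * x4^2 - 4 * x4^3) (6 * x2^2 + 4 * x2 * x3 + 4 * x2 * x4 + 6 * x3^2 + 4 * x3 * x4 + 6 * x4^2) (-4 * x2 - 4 * x3 - 4 * x4) (T + x1) (4*T*x1) = P8 T x1 x2 x3 x4"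
  unfolding ps4_def P8_def by algebra

definition Fp :: "complex \<Rightarrow> complex \<Rightarrow> complex \<Rightarrow> complex \<Rightarrow> complex" where
  "Fp x1 x2 x3 x4 = (-128 * x1 * x2^2 * x3 + 128 * x1 * x2^2 * x4 + 256 * x1 * x2 * x3^2 - 256 * x1 * x2 * x4^2 - 128 * x1 * x3^3 + 128 * x1 * x4^3 - 64 * x2^3 * x3 + 64 * x2^3 * x4 + 320 * x2^2 * x3^2 - 320 * x2^2 * x4^2 - 448 * x2 * x3^3 - 384 * x2 * x3^2 * x4 + 384 * x2 * x3 * x4^2 + 448 * x2 * x4^3 + 192 * x3^4 + 192 * x3^3 * x4 - 192 * x3 * x4^3 - 192 * x4^4)"

lemma key: "-3 * P8 (3*x3+3*x4-x1-x2) x1 x2 x3 x4 - (Fp x1 x2 x3 x4)^2 = (x1^2 + x1 * x2 - 3 * x1 * x3 - 3 * x1 * x4 + x2^2 - 3 * x2 * x3 - 3 * x2 * x4 + 3 * x3^2 + 3 * x3 * x4 + 3 * x4^2) * (-768 * x1^6 - 2304 * x1^5 * x2 + 6912 * x1^5 * x3 + 6912 * x1^5 * x4 - 4608 * x1^4 * x2^2 + 14592 * x1^4 * x2 * x3 + 14592 * x1^4 * x2 * x4 - 21504 * x1^4 * x3^2 - 48384 * x1^4 * x3 * x4 - 21504 * x1^4 * x4^2 - 5376 * x1^3 * x2^3 + 22272 * x1^3 * x2^2 * x3 + 22272 * x1^3 * x2^2 * x4 - 26880 * x1^3 * x2 * x3^2 - 64512 * x1^3 * x2 * x3 * x4 -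 26880 * x1^3 * x2 * x4^2 + 25344 * x1^3 * x3^3 + 108288 * x1^3 * x3^2 * x4 + 108288 * x1^3 * x3 * x4^2 + 25344 * x1^3 * x4^3 - 4608 * x1^2 * x2^4 + 22272 * x1^2 * x2^3 * x3 + 22272 * x1^2 * x2^3 * x4 - 42240 * x1^2 * x2^2 * x3^2 - 51456 * x1^2 * x2^2 * x3 * x4 - 42240 * x1^2 * x2^2 * x4^2 + 22272 * x1^2 * x2 * x3^3 + 51456 * x1^2 * x2 * x3^2 * x4 + 51456 * x1^2 * x2 * x3 * x4^2 + 22272 * x1^2 * x2 * x4^3 - 9216 * x1^2 * x3^4 - 74496 * x1^2 * x3^3 * x4 - 151296 * x1^2 * x3^2 * x4^2 - 74496 * x1^2 * x3 * x4^3 - 9216 * x1^2 * x4^4 - 2304 * x1 * x2^5 + 14592 * x1 * x2^4 * x3 + 14592 * x1 * x2^4 * x4 - 39168 * x1 * x2^3 * x3^2 - 39936 * x1 * x2^3 * x3 * x4 - 39168 * x1 * x2^3 * x4^2 + 59136 * x1 * x2^2 * x3^3 + 14592 * x1 * x2^2 * x3^2 * x4 + 14592 * x1 * x2^2 * x3 * x4^2 + 59136 * x1 * x2^2 * x4^3 - 34560 * x1 * x2 * x3^4 + 15360 * x1 * x2 * x3^3 * x4 + 79104 * x1 * x2 * x3^2 * x4^2 + 15360 * x1 * x2 * x3 * x4^3 - 34560 * x1 * x2 * x4^4 + 6912 * x1 * x3^5 + 2304 * x1 * x3^4 * x4 + 34560 * x1 * x3^3 * x4^2 + 34560 * x1 *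 x3^2 * x4^3 + 2304 * x1 * x3 * x4^4 + 6912 * x1 * x4^5 - 768 * x2^6 + 6912 * x2^5 * x3 + 6912 * x2^5 * x4 - 25600 * x2^4 * x3^2 - 40192 * x2^4 * x3 * x4 - 25600 * x2^4 * x4^2 + 54016 * x2^3 * x3^3 + 79616 * x2^3 * x3^2 * x4 + 79616 * x2^3 * x3 * x4^2 + 54016 * x2^3 * x4^3 - 70656 * x2^2 * x3^4 - 78592 * x2^2 * x3^3 * x4 - 20224 * x2^2 * x3^2 * x4^2 - 78592 * x2^2 * x3 * x4^3 - 70656 * x2^2 * x4^4 + 47872 * x2 * x3^5 + 51456 * x2 * x3^4 * x4 - 55552 * x2 * x3^3 * x4^2 - 55552 * x2 * x3^2 * x4^3 + 51456 * x2 * x3 * x4^4 + 47872 * x2 * x4^5 - 12544 * x3^6 - 13056 * x3^5 * x4 + 10752 * x3^4 * x4^2 + 22784 * x3^3 * x4^3 + 10752 * x3^2 * x4^4 - 13056 * x3 * x4^5 - 12544 * x4^6)"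
  unfolding P8_def Fp_def by algebra

definition Dp :: "(nat \<Rightarrow> complex) \<Rightarrow> nat set \<Rightarrow> complex \<Rightarrow> complex" where
  "Dp a A t = (\<Prod>S\<in>Pow A. t + (\<Sum>j\<in>A. (if j \<in> S then -1 else 1) * a j))"

lemma Dp_empty: "Dp a {} t = t"
  unfolding Dp_def by simp

lemma Dp_insert:
  assumes fin: "finite A" and j: "j \<notin> A"
  shows "Dp a (insert j A) t = Dp a A (t + a j) * Dp a A (t - a j)"
proof -
  have disj: "Pow A \<inter> insert j ` Pow A = {}" using j by auto
  have inj: "inj_on (insert j) (Pow A)" unfolding inj_on_def using j by (metis PowD insert_ident subsetD)
  have "Dp a (insert j A) t =
     (\<Prod>S\<in>Pow A. t + (\<Sum>i\<in>insert j A. (if i \<in> S then -1 else 1) * a i)) *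
     (\<Prod>S\<in>insert j ` Pow A. t + (\<Sum>i\<in>insert j A. (if i \<in> S then -1 else 1) * a i))"
    unfolding Dp_def Pow_insert using fin disj by (simp add: prod.union_disjoint)
  also have "(\<Prod>S\<in>Pow A. t + (\<Sum>i\<in>insert j A. (if i \<in> S then -1 else 1) * a i))
      = Dp a A (t + a j)"
    unfolding Dp_def
  proof (rule prod.cong[OF refl])
    fix S assume S: "S \<in> Pow A"
    then have "j \<notin> S" using j by auto
    then show "t + (\<Sum>i\<in>insert j A. (if i \<in> S then -1 else 1) * a i) =
        t + a j + (\<Sum>i\<in>A. (if i \<in> S then -1 else 1) * a i)"
      using fin j by (simp add: sum.insert)
  qed
  also have "(\<Prod>S\<in>insert j ` Pow A. t + (\<Sum>i\<in>insert j A. (if i \<in> S then -1 else 1) * a i))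
      = Dp a A (t - a j)"
    unfolding Dp_def prod.reindex[OF inj] o_def
  proof (rule prod.cong[OF refl])
    fix S assume S: "S \<in> Pow A"
    have "(\<Sum>i\<in>A. (if i \<in> insert j S then -1 else 1) * a i) = (\<Sum>i\<in>A. (if i \<in> S then -1 else 1) * a i)"
      using j by (intro sum.cong) auto
    then show "t + (\<Sum>i\<in>insert j A. (if i \<in> insert j S then -1 else 1) * a i) =
        t - a j + (\<Sum>i\<in>A. (if i \<in> S then -1 else 1) * a i)"
      using fin j by (simp add: sum.insert)
  qed
  finally show ?thesis .
qed

lemma Dp_poly:
  fixes a :: "nat \<Rightarrow> complex"
  assumes h1: "a 1 ^ 2 = x1" and h2: "a 2 ^ 2 = x2" and h3: "a 3 ^ 2 = x3" and h4: "a 4 ^ 2 = x4"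
  shows "Dp a {1,2,3,4} t = P8 (t^2) x1 x2 x3 x4"
proof -
  have D4: "Dp a {4} u = ph1 (- x4) (u^2)" for u
  proof -
    have "Dp a {4} u = (u + a 4) * (u - a 4)" using Dp_insert[of "{}" 4 a u] by (simp add: Dp_empty)
    also have "\<dots> = u^2 - (a 4)^2" by (simp add: power2_eq_square algebra_simps)
    finally show ?thesis using h4 by (simp add: ph1_def)
  qed
  have D34: "Dp a {3,4} u = ph2 (x3^2 - 2 * x3 * x4 + x4^2) (-2 * x3 - 2 * x4) (u^2)" for u
  proof -
    have "Dp a {3,4} u = ph1 (- x4) ((u + a 3)^2) * ph1 (- x4) ((u - a 3)^2)"
      using Dp_insert[of "{4}" 3 a u] D4 by simp
    also have "\<dots> = ps1 (- x4) (u^2 + x3) (4 * u^2 * x3)" by (rule step1[OF h3])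
    also have "\<dots> = ph2 (x3^2 - 2 * x3 * x4 + x4^2) (-2 * x3 - 2 * x4) (u^2)" by (rule stage2)
    finally show ?thesis .
  qed
  have D234: "Dp a {2,3,4} u = ph4 (x2^4 - 4 * x2^3 * x3 - 4 * x2^3 * x4 + 6 * x2^2 * x3^2 + 4 * x2^2 * x3 * x4 + 6 * x2^2 * x4^2 - 4 * x2 * x3^3 + 4 * x2 * x3^2 * x4 + 4 * x2 * x3 * x4^2 - 4 * x2 * x4^3 + x3^4 - 4 * x3^3 * x4 + 6 * x3^2 * x4^2 - 4 * x3 * x4^3 + x4^4) (-4 * x2^3 + 4 * x2^2 * x3 + 4 * x2^2 * x4 + 4 * x2 * x3^2 - 40 * x2 * x3 * x4 + 4 * x2 * x4^2 - 4 * x3^3 + 4 * x3^2 * x4 + 4 * x3 * x4^2 - 4 * x4^3) (6 * x2^2 + 4 * x2 * x3 + 4 * x2 * x4 + 6 * x3^2 + 4 * x3 * x4 + 6 * x4^2) (-4 * x2 - 4 * x3 - 4 * x4) (u^2)" for u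
  proof -
    have "Dp a {2,3,4} u = ph2 (x3^2 - 2 * x3 * x4 + x4^2) (-2 * x3 - 2 * x4) ((u + a 2)^2) * ph2 (x3^2 - 2 * x3 * x4 + x4^2) (-2 * x3 - 2 * x4) ((u - a 2)^2)"
      using Dp_insert[of "{3,4}" 2 a u] D34 by simp
    also have "\<dots> = ps2 (x3^2 - 2 * x3 * x4 + x4^2) (-2 * x3 - 2 * x4) (u^2 + x2) (4 * u^2 * x2)" by (rule step2[OF h2])
    also have "\<dots> = ph4 (x2^4 - 4 * x2^3 * x3 - 4 * x2^3 * x4 + 6 * x2^2 * x3^2 + 4 * x2^2 * x3 * x4 + 6 * x2^2 * x4^2 - 4 * x2 * x3^3 + 4 * x2 * x3^2 * x4 + 4 * x2 * x3 * x4^2 - 4 * x2 * x4^3 + x3^4 - 4 * x3^3 * x4 + 6 * x3^2 * x4^2 - 4 * x3 * x4^3 + x4^4) (-4 * x2^3 + 4 * x2^2 * x3 + 4 * x2^2 * x4 + 4 * x2 * x3^2 - 40 * x2 * x3 * x4 + 4 * x2 * x4^2 - 4 * x3^3 + 4 * x3^2 * x4 + 4 * x3 * x4^2 - 4 * x4^3) (6 * x2^2 + 4 * x2 * x3 + 4 * x2 * x4 + 6 * x3^2 + 4 * x3 * x4 + 6 * x4^2) (-4 * x2 - 4 * x3 - 4 * x4) (u^2)" by (rule stage4)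
    finally show ?thesis .
  qed
  have "Dp a {1,2,3,4} t = ph4 (x2^4 - 4 * x2^3 * x3 - 4 * x2^3 * x4 + 6 * x2^2 * x3^2 + 4 * x2^2 * x3 * x4 + 6 * x2^2 * x4^2 - 4 * x2 * x3^3 + 4 * x2 * x3^2 * x4 + 4 * x2 * x3 * x4^2 - 4 * x2 * x4^3 + x3^4 - 4 * x3^3 * x4 + 6 * x3^2 * x4^2 - 4 * x3 * x4^3 + x4^4) (-4 * x2^3 + 4 * x2^2 * x3 + 4 * x2^2 * x4 + 4 * x2 * x3^2 - 40 * x2 * x3 * x4 + 4 * x2 * x4^2 - 4 * x3^3 + 4 * x3^2 * x4 + 4 * x3 * x4^2 - 4 * x4^3) (6 * x2^2 + 4 * x2 * x3 + 4 * x2 * x4 + 6 * x3^2 + 4 * x3 * x4 + 6 * x4^2) (-4 * x2 - 4 * x3 - 4 * x4) ((t + a 1)^2) * ph4 (x2^4 - 4 * x2^3 * x3 - 4 * x2^3 * x4 + 6 * x2^2 * x3^2 + 4 * x2^2 * x3 * x4 + 6 * x2^2 * x4^2 - 4 * x2 * x3^3 + 4 * x2 * x3^2 * x4 + 4 * x2 * x3 * x4^2 - 4 * x2 * x4^3 + x3^4 - 4 * x3^3 * x4 + 6 * x3^2 * x4^2 - 4 * x3 * x4^3 + x4^4) (-4 * x2^3 + 4 * x2^2 * x3 + 4 * x2^2 * x4 + 4 * x2 * x3^2 - 40 * x2 * x3 * x4 + 4 * x2 * x4^2 - 4 * x3^3 + 4 * x3^2 * x4 + 4 * x3 * x4^2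 - 4 * x4^3) (6 * x2^2 + 4 * x2 * x3 + 4 * x2 * x4 + 6 * x3^2 + 4 * x3 * x4 + 6 * x4^2) (-4 * x2 - 4 * x3 - 4 * x4) ((t - a 1)^2)"
    using Dp_insert[of "{2,3,4}" 1 a t] D234 by simp
  also have "\<dots> = ps4 (x2^4 - 4 * x2^3 * x3 - 4 * x2^3 * x4 + 6 * x2^2 * x3^2 + 4 * x2^2 * x3 * x4 + 6 * x2^2 * x4^2 - 4 * x2 * x3^3 + 4 * x2 * x3^2 * x4 + 4 * x2 * x3 * x4^2 - 4 * x2 * x4^3 + x3^4 - 4 * x3^3 * x4 + 6 * x3^2 * x4^2 - 4 * x3 * x4^3 + x4^4) (-4 * x2^3 + 4 * x2^2 * x3 + 4 * x2^2 * x4 + 4 * x2 * x3^2 - 40 * x2 * x3 * x4 + 4 * x2 * x4^2 - 4 * x3^3 + 4 * x3^2 * x4 + 4 * x3 * x4^2 - 4 * x4^3) (6 * x2^2 + 4 * x2 * x3 + 4 * x2 * x4 + 6 * x3^2 + 4 * x3 * x4 + 6 * x4^2) (-4 * x2 - 4 * x3 - 4 * x4) (t^2 + x1) (4 * t^2 * x1)" by (rule step4[OF h1])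
  also have "\<dots> = P8 (t^2) x1 x2 x3 x4" by (rule stage8)
  finally show ?thesis .
qed

lemma DeltaP_poly: "DeltaP x = P8 (x 0) (x 1) (x 2) (x 3) (x 4)"
proof -
  have set: "{1..4::nat} = {1,2,3,4}" by auto
  have "DeltaP x = Dp (\<lambda>i. csqrt (x i)) {1,2,3,4} (csqrt (x 0))"
    unfolding DeltaP_def Dp_def set ..
  also have "\<dots> = P8 ((csqrt (x 0))^2) (x 1) (x 2) (x 3) (x 4)"
    by (rule Dp_poly) simp_all
  finally show ?thesis by simp
qed

definition cf :: "nat \<times> nat \<times> nat \<times> nat \<Rightarrow> rat" where
  "cf t = (if t = (0,0,0,4) then -192 else if t = (0,0,1,3) then -192 else if t = (0,0,3,1) then 192 else if t = (0,0,4,0) then 192 else if t = (0,1,0,3) then 448 else if t = (0,1,1,2) then 384 else if t = (0,1,2,1) then -384 else if t = (0,1,3,0) then -448 else if t = (0,2,0,2) then -320 else if t = (0,2,2,0) then 320 else if t = (0,3,0,1) then 64 else if t = (0,3,1,0) then -64 else if t = (1,0,0,3) then 128 else if t = (1,0,3,0) then -128 else if t = (1,1,0,2) then -256 else if t = (1,1,2,0) then 256 else if t = (1,2,0,1) then 128 else if t = (1,2,1,0) then -128 else 0)"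

definition Lset :: "(nat \<times> nat \<times> nat \<times> nat) set" where
  "Lset = {(0,0,0,4), (0,0,1,3), (0,0,3,1), (0,0,4,0), (0,1,0,3), (0,1,1,2), (0,1,2,1), (0,1,3,0), (0,2,0,2), (0,2,2,0), (0,3,0,1), (0,3,1,0), (1,0,0,3), (1,0,3,0), (1,1,0,2), (1,1,2,0), (1,2,0,1), (1,2,1,0)}"

definition cc :: "(nat \<Rightarrow> nat) \<Rightarrow> rat" where
  "cc e = (if e 0 = 0 \<and> (\<forall>i\<ge>5. e i = 0) then cf (e 1, e 2, e 3, e 4) else 0)"

definition mk :: "nat \<times> nat \<times> nat \<times> nat \<Rightarrow> nat \<Rightarrow> nat" where
  "mk t i = (case t of (a,b,c,d) \<Rightarrow> if i = 1 then a else if i = 2 then b else if i = 3 then c else if i = 4 then d else 0)"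

lemma lessThan5: "{..<5::nat} = {0,1,2,3,4}" by auto

lemma finite_monos5: "finite (monos5 d)"
proof -
  have "monos5 d \<subseteq> {f. \<forall>x. (x \<in> {..<5} \<longrightarrow> f x \<in> {0..d}) \<and> (x \<notin> {..<5} \<longrightarrow> f x = 0)}"
  proof
    fix e assume e: "e \<in> monos5 d"
    then have s: "sum e {..<5} = d" and z: "\<forall>i\<ge>5. e i = 0" unfolding monos5_def by auto
    have "e x \<le> d" if "x < 5" for x
      using member_le_sum[of x "{..<5}" e] that s by simp
    then show "e \<in> {f. \<forall>x. (x \<in> {..<5} \<longrightarrow> f x \<in> {0..d}) \<and> (x \<notin> {..<5} \<longrightarrow> f x = 0)}"
      using z by auto
  qed
  moreover have "finite {f. \<forall>x. (x \<in> {..<5::nat} \<longrightarrow> f x \<in> {0..d}) \<and> (x \<notin> {..<5} \<longrightarrow> f x = (0::nat))}"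
    by (rule finite_set_of_finite_funs) auto
  ultimately show ?thesis by (rule finite_subset)
qed

lemma inj_mk: "inj mk"
proof (rule injI)
  fix s t assume h: "mk s = mk t"
  obtain a b c d where s: "s = (a,b,c,d)" by (cases s) auto
  obtain a' b' c' d' where t: "t = (a',b',c',d')" by (cases t) auto
  have "mk s 1 = mk t 1" "mk s 2 = mk t 2" "mk s 3 = mk t 3" "mk s 4 = mk t 4" using h by auto
  then show "s = t" unfolding s t mk_def by simp
qed

lemma cf_nz: "cf t \<noteq> 0 \<Longrightarrow> t \<in> Lset"
  unfolding cf_def Lset_def by (simp split: if_splits)

lemma mk_sub: "mk ` Lset \<subseteq> monos5 4"
  unfolding Lset_def monos5_def by (auto simp: lessThan5 mk_def)

lemma form_eval_cc: "form_eval 4 cc x = Fp (x 1) (x 2) (x 3) (x 4)"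
proof -
  let ?g = "\<lambda>e. of_rat (cc e) * (\<Prod>i<5. x i ^ e i)"
  have zero: "\<forall>e\<in>monos5 4 - mk ` Lset. ?g e = 0"
  proof
    fix e assume e: "e \<in> monos5 4 - mk ` Lset"
    show "?g e = 0"
    proof (rule ccontr)
      assume "?g e \<noteq> 0"
      then have nz: "cc e \<noteq> 0" by auto
      then have e0: "e 0 = 0" and z: "\<forall>i\<ge>5. e i = 0" and c: "cf (e 1, e 2, e 3, e 4) \<noteq> 0"
        unfolding cc_def by (auto split: if_splits)
      have "e = mk (e 1, e 2, e 3, e 4)"
      proof
        fix i show "e i = mk (e 1, e 2, e 3, e 4) i"
          using e0 z by (cases "i \<ge> 5") (auto simp: mk_def not_le less_Suc_eq numeral_eq_Suc)
      qed
      then have "e \<in> mk ` Lset" using cf_nz[OF c] by blast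
      then show False using e by blast
    qed
  qed
  have "form_eval 4 cc x = sum ?g (mk ` Lset)"
    unfolding form_eval_def
    by (rule sum.mono_neutral_right[OF finite_monos5 mk_sub zero])
  also have "\<dots> = (\<Sum>t\<in>Lset. ?g (mk t))"
    by (simp add: sum.reindex[OF inj_on_subset[OF inj_mk subset_UNIV]])
  also have "\<dots> = Fp (x 1) (x 2) (x 3) (x 4)"
    unfolding Lset_def Fp_def by (simp add: lessThan5 mk_def cc_def cf_def)
  finally show ?thesis .
qed

lemma three_zero: "(3::complex) * z = 0 \<Longrightarrow> z = 0" by simp

lemma part1: "\<forall>x::nat \<Rightarrow> complex. lform x = 0 \<and> qform x = 0 \<longrightarrow>
            -3 * DeltaP x = (form_eval 4 cc x)^2"
proof (intro allI impI)
  fix x :: "nat \<Rightarrow> complex" assume h: "lform x = 0 \<and> qform x = 0"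
  have x0: "x 0 = 3 * x 3 + 3 * x 4 - x 1 - x 2" using h unfolding lform_def by (simp add: algebra_simps)
  define x1 where "x1 = x 1"
  define x2 where "x2 = x 2"
  define x3 where "x3 = x 3"
  define x4 where "x4 = x 4"
  have "qform x = 3 * (x1^2 + x1 * x2 - 3 * x1 * x3 - 3 * x1 * x4 + x2^2 - 3 * x2 * x3 - 3 * x2 * x4 + 3 * x3^2 + 3 * x3 * x4 + 3 * x4^2)"
    unfolding qform_def x0 x1_def[symmetric] x2_def[symmetric] x3_def[symmetric] x4_def[symmetric]
    by algebra
  then have "3 * (x1^2 + x1 * x2 - 3 * x1 * x3 - 3 * x1 * x4 + x2^2 - 3 * x2 * x3 - 3 * x2 * x4 + 3 * x3^2 + 3 * x3 * x4 + 3 * x4^2) = 0" using h by metis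
  then have q0: "(x1^2 + x1 * x2 - 3 * x1 * x3 - 3 * x1 * x4 + x2^2 - 3 * x2 * x3 - 3 * x2 * x4 + 3 * x3^2 + 3 * x3 * x4 + 3 * x4^2) = 0" by (rule three_zero)
  have "-3 * DeltaP x = -3 * P8 (3*x3+3*x4-x1-x2) x1 x2 x3 x4"
    unfolding DeltaP_poly x0 x1_def x2_def x3_def x4_def ..
  also have "\<dots> = (x1^2 + x1 * x2 - 3 * x1 * x3 - 3 * x1 * x4 + x2^2 - 3 * x2 * x3 - 3 * x2 * x4 + 3 * x3^2 + 3 * x3 * x4 + 3 * x4^2) * (-768 * x1^6 - 2304 * x1^5 * x2 + 6912 * x1^5 * x3 + 6912 * x1^5 * x4 - 4608 * x1^4 * x2^2 + 14592 * x1^4 * x2 * x3 + 14592 * x1^4 * x2 * x4 - 21504 * x1^4 * x3^2 - 48384 * x1^4 * x3 * x4 - 21504 * x1^4 * x4^2 - 5376 * x1^3 * x2^3 + 22272 * x1^3 * x2^2 * x3 + 22272 * x1^3 * x2^2 * x4 - 26880 * x1^3 * x2 * x3^2 - 64512 * x1^3 * x2 * x3 * x4 - 26880 * x1^3 * x2 * x4^2 + 25344 * x1^3 * x3^3 + 108288 * x1^3 * x3^2 * x4 + 108288 * x1^3 * x3 * x4^2 + 25344 * x1^3 * x4^3 - 4608 * x1^2 * x2^4 + 22272 * x1^2 * x2^3 * x3 + 22272 * x1^2 * x2^3 * x4 - 42240 * x1^2 * x2^2 * x3^2 - 51456 * x1^2 * x2^2 * x3 * x4 - 42240 * x1^2 *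 x2^2 * x4^2 + 22272 * x1^2 * x2 * x3^3 + 51456 * x1^2 * x2 * x3^2 * x4 + 51456 * x1^2 * x2 * x3 * x4^2 + 22272 * x1^2 * x2 * x4^3 - 9216 * x1^2 * x3^4 - 74496 * x1^2 * x3^3 * x4 - 151296 * x1^2 * x3^2 * x4^2 - 74496 * x1^2 * x3 * x4^3 - 9216 * x1^2 * x4^4 - 2304 * x1 * x2^5 + 14592 * x1 * x2^4 * x3 + 14592 * x1 * x2^4 * x4 - 39168 * x1 * x2^3 * x3^2 - 39936 * x1 * x2^3 * x3 * x4 - 39168 * x1 * x2^3 * x4^2 + 59136 * x1 * x2^2 * x3^3 + 14592 * x1 * x2^2 * x3^2 * x4 + 14592 * x1 * x2^2 * x3 * x4^2 + 59136 * x1 * x2^2 * x4^3 - 34560 * x1 * x2 * x3^4 + 15360 * x1 * x2 * x3^3 * x4 + 79104 * x1 * x2 * x3^2 * x4^2 + 15360 * x1 * x2 * x3 * x4^3 - 34560 * x1 * x2 * x4^4 + 6912 * x1 * x3^5 + 2304 * x1 * x3^4 * x4 + 34560 * x1 * x3^3 * x4^2 + 34560 * x1 * x3^2 * x4^3 + 2304 * x1 * x3 * x4^4 + 6912 * x1 * x4^5 - 768 * x2^6 + 6912 * x2^5 * x3 + 6912 * x2^5 * x4 - 25600 * x2^4 * x3^2 - 40192 * x2^4 * x3 * x4 - 25600 * x2^4 * x4^2 + 54016 * x2^3 * x3^3 + 79616 * x2^3 * x3^2 * x4 + 79616 * x2^3 * x3 * x4^2 + 54016 * x2^3 * x4^3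 - 70656 * x2^2 * x3^4 - 78592 * x2^2 * x3^3 * x4 - 20224 * x2^2 * x3^2 * x4^2 - 78592 * x2^2 * x3 * x4^3 - 70656 * x2^2 * x4^4 + 47872 * x2 * x3^5 + 51456 * x2 * x3^4 * x4 - 55552 * x2 * x3^3 * x4^2 - 55552 * x2 * x3^2 * x4^3 + 51456 * x2 * x3 * x4^4 + 47872 * x2 * x4^5 - 12544 * x3^6 - 13056 * x3^5 * x4 + 10752 * x3^4 * x4^2 + 22784 * x3^3 * x4^3 + 10752 * x3^2 * x4^4 - 13056 * x3 * x4^5 - 12544 * x4^6) + (Fp x1 x2 x3 x4)^2"
    using key[of x3 x4 x1 x2] by (simp only: diff_eq_eq)
  also have "\<dots> = (Fp x1 x2 x3 x4)^2" unfolding q0 by simp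
  finally show "-3 * DeltaP x = (form_eval 4 cc x)^2"
    unfolding form_eval_cc x1_def x2_def x3_def x4_def .
qed

lemma part2: "\<forall>x::nat \<Rightarrow> rat. (\<exists>i<5. x i \<noteq> 0) \<and> lform x = 0 \<and> qform x = 0 \<longrightarrow>
            (\<exists>w::rat. (of_rat w)^2 = -3 * DeltaP (\<lambda>i. of_rat (x i)))"
proof (intro allI impI)
  fix x :: "nat \<Rightarrow> rat" assume h: "(\<exists>i<5. x i \<noteq> 0) \<and> lform x = 0 \<and> qform x = 0"
  let ?y = "\<lambda>i. (of_rat (x i) :: complex)"
  have "lform ?y = of_rat (lform x)" unfolding lform_def by (simp add: of_rat_add of_rat_diff of_rat_mult)
  then have l: "lform ?y = 0" using h by simp
  have "qform ?y = of_rat (qform x)" unfolding qform_def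
    by (simp add: of_rat_add of_rat_diff of_rat_mult of_rat_power)
  then have q: "qform ?y = 0" using h by simp
  let ?w = "\<Sum>e\<in>monos5 4. cc e * (\<Prod>i<5. x i ^ e i)"
  have "of_rat ?w = form_eval 4 cc ?y"
    unfolding form_eval_def by (simp add: of_rat_sum of_rat_mult of_rat_prod of_rat_power)
  then have "(of_rat ?w)^2 = -3 * DeltaP ?y" using part1 l q by simp
  then show "\<exists>w::rat. (of_rat w)^2 = -3 * DeltaP ?y" by blast
qed

definition pt :: "rat \<Rightarrow> nat \<Rightarrow> rat" where
  "pt t i = (if i = 0 then (t+2)^2 else if i = 1 then t^2+t+1 else if i = 2 then t^2+t+1
      else if i = 3 then (t+1)^2 else if i = 4 then 1 else 0)"

lemma pt_on_Q: "(\<exists>i<5. pt t i \<noteq> 0) \<and> lform (pt t) = 0 \<and> qform (pt t) = 0"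
proof -
  have "\<exists>i<5. pt t i \<noteq> 0" by (rule exI[of _ 4]) (simp add: pt_def)
  moreover have "lform (pt t) = 0" unfolding lform_def pt_def by (simp add: power2_eq_square algebra_simps)
  moreover have "qform (pt t) = 0" unfolding qform_def pt_def by simp algebra
  ultimately show ?thesis by auto
qed

lemma part3: "infinite O_rat_points"
proof -
  define w where "w t = (SOME w::rat. (of_rat w)^2 = -3 * DeltaP (\<lambda>i. of_rat (pt t i)))" for t
  have wt: "(of_rat (w t))^2 = -3 * DeltaP (\<lambda>i. of_rat (pt t i))" for t
  proof -
    have "\<exists>w::rat. (of_rat w)^2 = -3 * DeltaP (\<lambda>i. of_rat (pt t i))"
      by (rule part2[rule_format, OF pt_on_Q])
    then show ?thesis unfolding w_def by (rule someI_ex)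
  qed
  define cls where "cls t = {(\<mu>^4 * w t, \<lambda>i. \<mu> * pt t i) | \<mu>. \<mu> \<noteq> 0}" for t
  have sub: "range cls \<subseteq> O_rat_points"
  proof
    fix C assume "C \<in> range cls"
    then obtain t where C: "C = cls t" by auto
    have z: "\<forall>i\<ge>5. pt t i = 0" by (simp add: pt_def)
    have nz: "\<exists>i<5. pt t i \<noteq> 0" using pt_on_Q[of t] by (rule conjunct1)
    have "C = {(\<mu>^4 * w t, \<lambda>i. \<mu> * pt t i) | \<mu>. \<mu> \<noteq> 0} \<and> (\<forall>i\<ge>5. pt t i = 0) \<and> (\<exists>i<5. pt t i \<noteq> 0) \<and>
      (of_rat (w t))^2 = -3 * DeltaP (\<lambda>i. of_rat (pt t i))"
      using C z nz wt[of t] unfolding cls_def by (intro conjI)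
    then have "\<exists>ww xx. C = {(\<mu>^4 * ww, \<lambda>i. \<mu> * xx i) | \<mu>. \<mu> \<noteq> 0} \<and> (\<forall>i\<ge>5. xx i = 0) \<and> (\<exists>i<5. xx i \<noteq> 0) \<and>
      (of_rat ww)^2 = -3 * DeltaP (\<lambda>i. of_rat (xx i))"
      by (intro exI)
    then show "C \<in> O_rat_points" unfolding O_rat_points_def by (simp only: mem_Collect_eq)
  qed
  have "inj cls"
  proof (rule injI)
    fix s t assume h: "cls s = cls t"
    have "(w s, pt s) \<in> cls s" unfolding cls_def by (intro CollectI exI[of _ "1::rat"]) simp
    then have "(w s, pt s) \<in> cls t" by (simp only: h)
    then obtain \<mu> where "(w s, pt s) = (\<mu>^4 * w t, \<lambda>i. \<mu> * pt t i)" unfolding cls_def by blast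
    then have m: "pt s = (\<lambda>i. \<mu> * pt t i)" by simp
    have m4: "pt s 4 = \<mu> * pt t 4" using fun_cong[OF m, of 4] by simp
    have m0: "pt s 0 = \<mu> * pt t 0" using fun_cong[OF m, of 0] by simp
    have m3: "pt s 3 = \<mu> * pt t 3" using fun_cong[OF m, of 3] by simp
    have "\<mu> = 1" using m4 by (simp add: pt_def)
    then have "pt s 0 - pt s 3 = pt t 0 - pt t 3" using m0 m3 by simp
    then have "2 * s + 3 = 2 * t + 3" unfolding pt_def by (simp add: power2_eq_square algebra_simps)
    then show "s = t" by simp
  qed
  then have "infinite (range cls)" using infinite_UNIV_char_0 finite_imageD by blast
  then show ?thesis using sub infinite_super by blast
qed

theorem mainTheorem11:
  shows "(\<exists>c. \<forall>x::nat \<Rightarrow> complex. lform x = 0 \<and> qform x = 0 \<longrightarrow>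
            -3 * DeltaP x = (form_eval 4 c x)^2)
       \<and> (\<forall>x::nat \<Rightarrow> rat. (\<exists>i<5. x i \<noteq> 0) \<and> lform x = 0 \<and> qform x = 0 \<longrightarrow>
            (\<exists>w::rat. (of_rat w)^2 = -3 * DeltaP (\<lambda>i. of_rat (x i))))
       \<and> infinite O_rat_points"
  using part1 part2 part3 by blast

end
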